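(* Let $r\ge 1$ be an integer, $\overline{x}\in\mathbb{R}^n$, and let $f:\mathbb{R}^n\to\mathbb{R}$ be of class $C^r$ on a neighbourhood of $\overline{x}$. Assume that $T^{r-1}f(\overline{x})$ is the constant polynomial $f(\overline{x})$, and that $\nabla\big(T^rf(\overline{x})\big)(x)=0$ if and only if $x=\overline{x}$. Then there exist $c>0$ and $\delta>0$ such that $$\|\nabla f(x)\|\ge c\,\|x-\overline{x}\|^{r-1}\quad\text{for all }x\in\mathbb{B}_\delta(\overline{x}).$$ Consequently: (a) $f$ has a local minimum at $\overline{x}$ if and only if $T^rf(\overline{x})$ has a local minimum at $\overline{x}$; and (b) if $f$ has a local minimum at $\overline{x}$, then there exists $\epsilon>0$ such that for every function $h:\mathbb{R}^n\to\mathbb{R}$ for which there is $\rho>0$ with $|h(x)-h(\overline{x})|\le\epsilon\,\|x-\overline{x}\|^r$ for all $x\in\mathbb{B}_\rho(\overline{x})$, the function $f+h$ has a local minimum at $\overline{x}$.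
   Context: $\mathbb{B}_\delta(x)$ denotes the closed Euclidean ball of radius $\delta$ centered at $x$. We use the convention $t^0=1$ for all $t\ge 0$. For $k\le r$, $T^kf(\overline{x})$ denotes the $k$th Taylor polynomial of $f$ at $\overline{x}$: $T^kf(\overline{x})(x)=\sum_{j=0}^k\frac{1}{j!}\sum_{i_1,\dots,i_j=1}^n\frac{\partial^j f}{\partial x_{i_1}\cdots\partial x_{i_j}}(\overline{x})(x_{i_1}-\overline{x}_{i_1})\cdots(x_{i_j}-\overline{x}_{i_j})$. *)

theory Defs
  imports "HOL-Analysis.Analysis"
begin

definition pd :: "'n::finite \<Rightarrow> (real^'n \<Rightarrow> real) \<Rightarrow> real^'n \<Rightarrow> real" where
  "pd i g x = deriv (\<lambda>t. g (x + t *\<^sub>R axis i 1)) 0"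

fun pds :: "'n::finite list \<Rightarrow> (real^'n \<Rightarrow> real) \<Rightarrow> real^'n \<Rightarrow> real" where
  "pds [] g = g"
| "pds (i # is) g = pd i (pds is g)"

definition Cr_on :: "nat \<Rightarrow> (real^'n::finite \<Rightarrow> real) \<Rightarrow> (real^'n) set \<Rightarrow> bool" where
  "Cr_on r f U \<longleftrightarrow> open U \<and>
     (\<forall>is i x. length is < r \<longrightarrow> x \<in> U \<longrightarrow>
        (\<lambda>t. pds is f (x + t *\<^sub>R axis i 1)) differentiable (at 0)) \<and>
     (\<forall>is. length is \<le> r \<longrightarrow> continuous_on U (pds is f))"

definition grad :: "(real^'n::finite \<Rightarrow> real) \<Rightarrow> real^'n \<Rightarrow> real^'n" where
  "grad g x = (\<chi> i. pd i g x)"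

definition taylor :: "nat \<Rightarrow> (real^'n::finite \<Rightarrow> real) \<Rightarrow> real^'n \<Rightarrow> real^'n \<Rightarrow> real" where
  "taylor k f xb x = (\<Sum>j\<le>k. (1 / fact j) *
      (\<Sum>is\<in>{is :: 'n list. length is = j}.
          pds is f xb * (\<Prod>l<j. x $ (is ! l) - xb $ (is ! l))))"

definition local_min_at :: "(real^'n::finite \<Rightarrow> real) \<Rightarrow> real^'n \<Rightarrow> bool" where
  "local_min_at g xb \<longleftrightarrow> (\<exists>\<delta>>0. \<forall>x\<in>cball xb \<delta>. g xb \<le> g x)"

end

theory Submission
  imports Defs
begin


definition PP :: "('n::finite list \<Rightarrow> real) \<Rightarrow> nat \<Rightarrow> real^'n \<Rightarrow> real" where
  "PP c m v = (\<Sum>ks\<in>{ks::'n list. length ks = m}. c ks * (\<Prod>l<m. v $ (ks!l)))"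

lemma finite_len: "finite {ks::'n::finite list. length ks = m}"
  using finite_lists_length_eq[of "UNIV::'n set" m] by simp

lemma sum_len_Suc:
  "(\<Sum>ks\<in>{ks::'n::finite list. length ks = Suc m}. F ks) = (\<Sum>a\<in>UNIV. \<Sum>ks\<in>{ks. length ks = m}. F (a#ks))"
proof -
  have e: "{ks::'n list. length ks = Suc m} = (\<lambda>(a,ks). a#ks) ` (UNIV \<times> {ks. length ks = m})"
    by (auto simp: length_Suc_conv image_def)
  have i: "inj_on (\<lambda>(a,ks). a#ks) (UNIV \<times> {ks::'n list. length ks = m})"
    by (auto simp: inj_on_def)
  show ?thesis unfolding e sum.reindex[OF i]
    by (simp add: sum.cartesian_product case_prod_unfold)
qed

lemma PP_0[simp]: "PP c 0 v = c []"
proof -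
  have "{ks::'n list. length ks = 0} = {[]}" by auto
  then show ?thesis unfolding PP_def by simp
qed

lemma PP_Suc: "PP c (Suc m) v = (\<Sum>a\<in>UNIV. v$a * PP (\<lambda>ks. c (a#ks)) m v)"
  unfolding PP_def sum_len_Suc
  by (simp add: prod.lessThan_Suc_shift sum_distrib_left mult_ac del: prod.lessThan_Suc)

lemma PP_scale: "PP c m (t *\<^sub>R v) = t^m * PP c m v"
  unfolding PP_def
  by (simp add: prod.distrib sum_distrib_left mult_ac)

lemma PP_cont: "continuous_on S (PP c m)"
  unfolding PP_def
  by (intro continuous_intros)

lemma PP_diff_bound:
  fixes c1 c2 :: "'n::finite list \<Rightarrow> real"
  assumes "\<And>ks. length ks = m \<Longrightarrow> \<bar>c1 ks - c2 ks\<bar> \<le> e"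
  shows "\<bar>PP c1 m v - PP c2 m v\<bar> \<le> real (card {ks::'n::finite list. length ks = m}) * e * norm v ^ m"
proof -
  have "\<bar>PP c1 m v - PP c2 m v\<bar> = \<bar>\<Sum>ks\<in>{ks::'n list. length ks = m}. (c1 ks - c2 ks) * (\<Prod>l<m. v $ (ks!l))\<bar>"
    unfolding PP_def by (simp add: sum_subtractf left_diff_distrib)
  also have "\<dots> \<le> (\<Sum>ks\<in>{ks::'n list. length ks = m}. \<bar>(c1 ks - c2 ks) * (\<Prod>l<m. v $ (ks!l))\<bar>)"
    by (rule sum_abs)
  also have "\<dots> \<le> (\<Sum>ks\<in>{ks::'n list. length ks = m}. e * norm v ^ m)"
  proof (rule sum_mono)
    fix ks :: "'n list" assume "ks \<in> {ks. length ks = m}"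
    then have l: "length ks = m" by simp
    have "\<bar>\<Prod>l<m. v $ (ks!l)\<bar> = (\<Prod>l<m. \<bar>v $ (ks!l)\<bar>)" by (simp add: abs_prod)
    also have "\<dots> \<le> (\<Prod>l<m. norm v)"
      by (intro prod_mono) (auto simp: component_le_norm_cart)
    finally have p: "\<bar>\<Prod>l<m. v $ (ks!l)\<bar> \<le> norm v ^ m" by simp
    show "\<bar>(c1 ks - c2 ks) * (\<Prod>l<m. v $ (ks!l))\<bar> \<le> e * norm v ^ m"
      unfolding abs_mult using assms[OF l] p by (intro mult_mono) auto
  qed
  also have "\<dots> = real (card {ks::'n::finite list. length ks = m}) * e * norm v ^ m" by simp
  finally show ?thesis .
qed



definition SymK :: "nat \<Rightarrow> ('n list \<Rightarrow> real) \<Rightarrow> bool" where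
  "SymK k c \<longleftrightarrow> (\<forall>p a b s. length p + length s + 2 \<le> k \<longrightarrow> c (p @ a # b # s) = c (p @ b # a # s))"

lemma SymK_Cons:
  fixes c :: "'n list \<Rightarrow> real"
  shows "SymK (Suc k) c \<Longrightarrow> SymK k (\<lambda>xs. c (a#xs))"
  unfolding SymK_def
proof (intro allI impI)
  fix p :: "'n list" and aa b :: 'n and s :: "'n list"
  assume h: "\<forall>p a b s. length p + length s + 2 \<le> Suc k \<longrightarrow> c (p @ a # b # s) = c (p @ b # a # s)"
    and l: "length p + length s + 2 \<le> k"
  show "c (a # p @ aa # b # s) = c (a # p @ b # aa # s)"
    using h[rule_format, of "a#p" s aa b] l by simp
qed

lemma SymK_move: "SymK k c \<Longrightarrow> length p + length s + 1 \<le> k \<Longrightarrow> c (p @ a # s) = c (a # p @ s)"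
proof (induction p arbitrary: c k)
  case Nil
  then show ?case by simp
next
  case (Cons x p)
  then obtain k' where k: "k = Suc k'" by (cases k) auto
  have "c (x # p @ a # s) = c (x # a # p @ s)"
    using Cons.IH[of k' "\<lambda>xs. c (x#xs)"] SymK_Cons[of k' c x] Cons.prems k by simp
  also have "\<dots> = c (a # x # p @ s)"
    using Cons.prems unfolding SymK_def
    by (metis append_Nil length_Cons length_append list.size(3) add.commute add_Suc_right one_add_one plus_1_eq_Suc)
  finally show ?case by simp
qed

lemma SymK_mset: "SymK k c \<Longrightarrow> length xs \<le> k \<Longrightarrow> mset xs = mset ys \<Longrightarrow> c xs = c ys"
proof (induction xs arbitrary: ys c k)
  case Nil
  then show ?case by simp
next
  case (Cons a xs)
  have "a \<in> set ys" using Cons.prems(3) by (metis list.set_intros(1) set_mset_mset)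
  then obtain p s where ys: "ys = p @ a # s" by (meson split_list)
  obtain k' where k: "k = Suc k'" using Cons.prems(2) by (cases k) auto
  have ly: "length ys = length (a#xs)" using Cons.prems(3) by (metis size_mset)
  have "c ys = c (a # p @ s)"
    using SymK_move[OF Cons.prems(1), of p s a] ys ly Cons.prems(2) by simp
  moreover have "c (a # xs) = c (a # p @ s)"
    using Cons.IH[of k' "\<lambda>xs. c (a#xs)" "p @ s"] SymK_Cons[of k' c a] Cons.prems k ys by simp
  ultimately show ?case by simp
qed

lemma axis_nth_if: "axis i (1::real) $ a = (if a = i then 1 else 0)"
  by (simp add: axis_def)

lemma sum_delta_mult: "(\<Sum>a\<in>(UNIV::'n::finite set). (if a = i then 1 else 0) * F a) = (F i::real)"
proof -
  have "\<And>a. (if a = i then 1 else 0) * F a = (if a = i then F a else 0)" by simp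
  then show ?thesis by (simp only: sum.delta) simp
qed

lemma PP_deriv:
  fixes c :: "'n::finite list \<Rightarrow> real"
  shows "SymK (Suc m) c \<Longrightarrow>
    ((\<lambda>s. PP c (Suc m) (v + s *\<^sub>R axis i 1)) has_field_derivative
       real (Suc m) * PP (\<lambda>xs. c (xs @ [i])) m v) (at 0)"
proof (induction m arbitrary: c)
  case 0
  have d: "((\<lambda>s. (v + s *\<^sub>R axis i 1) $ a * PP (\<lambda>xs. c (a # xs)) 0 (v + s *\<^sub>R axis i 1))
      has_field_derivative (if a = i then 1 else 0) * c [a]) (at 0)" for a
    by (auto intro!: derivative_eq_intros simp: axis_nth_if)
  have "((\<lambda>s. PP c (Suc 0) (v + s *\<^sub>R axis i 1)) has_field_derivative
       (\<Sum>a\<in>UNIV. (if a = i then 1 else 0) * c [a])) (at 0)"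
    unfolding PP_Suc by (rule DERIV_sum) (rule d)
  moreover have "(\<Sum>a\<in>UNIV. (if a = i then 1 else 0) * c [a]) = c [i]"
  proof -
    have "\<And>a. (if a = i then 1 else 0) * c [a] = (if a = i then c [a] else 0)" by simp
    then show ?thesis by (simp only: sum.delta) simp
  qed
  ultimately show ?case by simp
next
  case (Suc m)
  have IH: "((\<lambda>s. PP (\<lambda>xs. c (a#xs)) (Suc m) (v + s *\<^sub>R axis i 1)) has_field_derivative
       real (Suc m) * PP (\<lambda>xs. c (a # xs @ [i])) m v) (at 0)" for a
    using Suc.IH[of "\<lambda>xs. c (a#xs)"] SymK_Cons[OF Suc.prems] by simp
  have d: "((\<lambda>s. (v + s *\<^sub>R axis i 1) $ a * PP (\<lambda>xs. c (a # xs)) (Suc m) (v + s *\<^sub>R axis i 1))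
      has_field_derivative (if a = i then 1 else 0) * PP (\<lambda>xs. c (a # xs)) (Suc m) v
        + v $ a * (real (Suc m) * PP (\<lambda>xs. c (a # xs @ [i])) m v)) (at 0)" for a
  proof -
    have d1: "((\<lambda>s. (v + s *\<^sub>R axis i 1) $ a) has_field_derivative (if a = i then 1 else 0)) (at 0)"
      by (auto intro!: derivative_eq_intros simp: axis_nth_if)
    show ?thesis by (rule DERIV_cong[OF DERIV_mult[OF d1 IH[of a]]]) simp
  qed
  have "((\<lambda>s. PP c (Suc (Suc m)) (v + s *\<^sub>R axis i 1)) has_field_derivative
       (\<Sum>a\<in>UNIV. (if a = i then 1 else 0) * PP (\<lambda>xs. c (a # xs)) (Suc m) v
        + v $ a * (real (Suc m) * PP (\<lambda>xs. c (a # xs @ [i])) m v))) (at 0)"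
    unfolding PP_Suc[of c "Suc m"] by (rule DERIV_sum) (rule d)
  moreover have "(\<Sum>a\<in>UNIV. (if a = i then 1 else 0) * PP (\<lambda>xs. c (a # xs)) (Suc m) v
        + v $ a * (real (Suc m) * PP (\<lambda>xs. c (a # xs @ [i])) m v))
      = PP (\<lambda>xs. c (i # xs)) (Suc m) v + real (Suc m) * PP (\<lambda>xs. c (xs @ [i])) (Suc m) v"
    by (simp add: sum.distrib PP_Suc[of "\<lambda>xs. c (xs @ [i])" m] sum_distrib_left mult_ac sum_delta_mult)
  moreover have "PP (\<lambda>xs. c (i # xs)) (Suc m) v = PP (\<lambda>xs. c (xs @ [i])) (Suc m) v"
    unfolding PP_def
  proof (rule sum.cong[OF refl])
    fix xs :: "'n list" assume "xs \<in> {xs. length xs = Suc m}"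
    then have "c (i # xs) = c (xs @ [i])"
      using SymK_mset[OF Suc.prems, of "i#xs" "xs @ [i]"] by simp
    then show "c (i # xs) * (\<Prod>l<Suc m. v $ xs ! l) = c (xs @ [i]) * (\<Prod>l<Suc m. v $ xs ! l)"
      by simp
  qed
  ultimately show ?case by (simp add: algebra_simps)
qed



definition C1 :: "(real^'n::finite \<Rightarrow> real) \<Rightarrow> (real^'n) set \<Rightarrow> bool" where
  "C1 g U \<longleftrightarrow> open U \<and> (\<forall>z\<in>U. \<forall>i. (\<lambda>t. g (z + t *\<^sub>R axis i 1)) differentiable (at 0))
     \<and> (\<forall>i. continuous_on U (pd i g))"

lemma pd_DERIV:
  assumes "\<forall>z\<in>U. (\<lambda>t. g (z + t *\<^sub>R axis i 1)) differentiable (at 0)"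
    and "z + t *\<^sub>R axis i 1 \<in> U"
  shows "((\<lambda>t. g (z + t *\<^sub>R axis i 1)) has_field_derivative pd i g (z + t *\<^sub>R axis i 1)) (at t)"
proof -
  define y where "y = z + t *\<^sub>R axis i 1"
  have "(\<lambda>s. g (y + s *\<^sub>R axis i 1)) differentiable (at 0)" using assms y_def by auto
  then have d: "((\<lambda>s. g (y + s *\<^sub>R axis i 1)) has_field_derivative pd i g y) (at 0)"
    unfolding pd_def using DERIV_deriv_iff_real_differentiable by blast
  have e: "(\<lambda>s. g (y + s *\<^sub>R axis i 1)) = (\<lambda>s. (\<lambda>t. g (z + t *\<^sub>R axis i 1)) (s + t))"
    by (rule ext) (simp add: y_def scaleR_add_left algebra_simps)
  have "((\<lambda>t. g (z + t *\<^sub>R axis i 1)) has_field_derivative pd i g y) (at (0 + t))"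
    unfolding DERIV_shift using d e by simp
  then show ?thesis by (simp add: y_def)
qed

lemma mvt_sym:
  fixes F :: "real \<Rightarrow> real"
  assumes "\<And>t. \<bar>t\<bar> \<le> \<bar>s\<bar> \<Longrightarrow> (F has_field_derivative F' t) (at t)"
  shows "\<exists>\<tau>. \<bar>\<tau>\<bar> \<le> \<bar>s\<bar> \<and> F s - F 0 = s * F' \<tau>"
proof (cases "s = 0")
  case True then show ?thesis by auto
next
  case False
  show ?thesis
  proof (cases "s > 0")
    case True
    from MVT2[of 0 s F F'] True assms obtain z where "0 < z" "z < s" "F s - F 0 = (s - 0) * F' z"
      by auto
    then show ?thesis by (intro exI[of _ z]) auto
  next
    case f: False
    with False have "s < 0" by simp
    from MVT2[of s 0 F F'] this assms obtain z where "s < z" "z < 0" "F 0 - F s = (0 - s) * F' z"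
      by auto
    then show ?thesis by (intro exI[of _ z]) (auto simp: algebra_simps)
  qed
qed

definition mask :: "'n::finite set \<Rightarrow> real^'n \<Rightarrow> real^'n" where
  "mask S h = (\<chi> j. if j \<in> S then h$j else 0)"

lemma frechet:
  fixes g :: "real^'n::finite \<Rightarrow> real"
  assumes C: "C1 g U" and y: "y \<in> U"
  shows "(g has_derivative (\<lambda>h. \<Sum>i\<in>UNIV. h$i * pd i g y)) (at y)"
  unfolding has_derivative_at_alt
proof (intro conjI allI impI)
  show "bounded_linear (\<lambda>h. \<Sum>i\<in>UNIV. h$i * pd i g y)"
    by (auto intro!: bounded_linear_intros)
next
  fix e :: real assume e: "e > 0"
  define e' where "e' = e / real CARD('n)"
  have e': "e' > 0" using e by (simp add: e'_def)
  have oU: "open U" using C by (simp add: C1_def)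
  have ev1: "\<forall>\<^sub>F z in at y. \<forall>i. dist (pd i g z) (pd i g y) < e'"
  proof (rule eventually_all_finite)
    fix i
    have "isCont (pd i g) y"
      using C y oU by (simp add: C1_def continuous_on_eq_continuous_at)
    then show "\<forall>\<^sub>F z in at y. dist (pd i g z) (pd i g y) < e'"
      using e' by (simp add: isCont_def tendsto_iff)
  qed
  have ev2: "\<forall>\<^sub>F z in at y. z \<in> U"
    using oU y eventually_at_topological by blast
  have "\<exists>d>0. \<forall>z\<in>UNIV. z \<noteq> y \<and> dist z y < d \<longrightarrow> (\<forall>i. dist (pd i g z) (pd i g y) < e') \<and> z \<in> U"
    using eventually_conj[OF ev1 ev2] unfolding eventually_at .
  then obtain d where d: "d > 0"
    and dP: "\<And>z. z \<noteq> y \<Longrightarrow> dist z y < d \<Longrightarrow> (\<forall>i. dist (pd i g z) (pd i g y) < e') \<and> z \<in> U"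
    by blast
  have dQ: "(\<forall>i. \<bar>pd i g z - pd i g y\<bar> \<le> e') \<and> z \<in> U" if "dist z y < d" for z
  proof (cases "z = y")
    case True then show ?thesis using y e' by simp
  next
    case False
    from dP[OF False that] have "\<forall>i. dist (pd i g z) (pd i g y) < e'" "z \<in> U" by auto
    then show ?thesis by (auto simp: dist_real_def less_imp_le)
  qed
  show "\<exists>d>0. \<forall>z. norm (z - y) < d \<longrightarrow>
      norm (g z - g y - (\<Sum>i\<in>UNIV. (z - y)$i * pd i g y)) \<le> e * norm (z - y)"
  proof (intro exI[of _ d] conjI allI impI)
    show "d > 0" by fact
    fix z assume nz: "norm (z - y) < d"
    define h where "h = z - y"
    have hd: "norm h < d" using nz h_def by simp
    have tel: "\<bar>g (y + mask S h) - g y - (\<Sum>i\<in>S. h$i * pd i g y)\<bar> \<le> real (card S) * e' * norm h"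
      if "finite S" for S
      using that
    proof (induction S rule: finite_induct)
      case empty
      have "mask {} h = 0" by (simp add: mask_def vec_eq_iff)
      then show ?case by simp
    next
      case (insert a S)
      define w where "w = y + mask S h"
      have m: "y + mask (insert a S) h = w + h$a *\<^sub>R axis a 1"
        using insert.hyps by (auto simp: w_def mask_def vec_eq_iff axis_def)
      have inball: "dist (w + t *\<^sub>R axis a 1) y < d" if "\<bar>t\<bar> \<le> \<bar>h$a\<bar>" for t
      proof -
        have "norm (mask S h + t *\<^sub>R axis a 1) \<le> norm h"
          by (rule norm_le_componentwise_cart)
             (use that insert.hyps in \<open>auto simp: mask_def axis_def\<close>)
        then show ?thesis using hd by (simp add: w_def dist_norm)
      qed
      have der: "((\<lambda>t. g (w + t *\<^sub>R axis a 1)) has_field_derivative pd a g (w + t *\<^sub>R axis a 1)) (at t)"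
        if "\<bar>t\<bar> \<le> \<bar>h$a\<bar>" for t
      proof (rule pd_DERIV[of U g a w t])
        show "\<forall>z\<in>U. (\<lambda>t. g (z + t *\<^sub>R axis a 1)) differentiable (at 0)"
          using C by (simp add: C1_def)
        show "w + t *\<^sub>R axis a 1 \<in> U" using dQ[OF inball[OF that]] by blast
      qed
      from mvt_sym[of "h$a" "\<lambda>t. g (w + t *\<^sub>R axis a 1)", OF der]
      obtain \<tau> where tau: "\<bar>\<tau>\<bar> \<le> \<bar>h$a\<bar>"
        and eq: "g (w + h$a *\<^sub>R axis a 1) - g w = h$a * pd a g (w + \<tau> *\<^sub>R axis a 1)"
        by auto
      have b1: "\<bar>pd a g (w + \<tau> *\<^sub>R axis a 1) - pd a g y\<bar> \<le> e'"
        using dQ[OF inball[OF tau]] by blast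
      have "\<bar>h$a * (pd a g (w + \<tau> *\<^sub>R axis a 1) - pd a g y)\<bar> \<le> norm h * e'"
        unfolding abs_mult by (rule mult_mono) (use b1 component_le_norm_cart in auto)
      moreover have "g (y + mask (insert a S) h) - g y - (\<Sum>i\<in>insert a S. h$i * pd i g y)
          = h$a * (pd a g (w + \<tau> *\<^sub>R axis a 1) - pd a g y) + (g w - g y - (\<Sum>i\<in>S. h$i * pd i g y))"
        using insert.hyps m eq by (simp add: algebra_simps)
      moreover have "\<bar>g w - g y - (\<Sum>i\<in>S. h$i * pd i g y)\<bar> \<le> real (card S) * e' * norm h"
        using insert.IH unfolding w_def .
      ultimately have "\<bar>g (y + mask (insert a S) h) - g y - (\<Sum>i\<in>insert a S. h$i * pd i g y)\<bar>
          \<le> norm h * e' + real (card S) * e' * norm h"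
        by (smt (verit, best))
      then show ?case using insert.hyps by (simp add: algebra_simps)
    qed
    have "mask UNIV h = h" by (simp add: mask_def vec_eq_iff)
    then have "\<bar>g z - g y - (\<Sum>i\<in>UNIV. h$i * pd i g y)\<bar> \<le> real CARD('n) * e' * norm h"
      using tel[of UNIV] h_def by simp
    also have "real CARD('n) * e' = e" by (simp add: e'_def)
    finally show "norm (g z - g y - (\<Sum>i\<in>UNIV. (z - y)$i * pd i g y)) \<le> e * norm (z - y)"
      using h_def by simp
  qed
qed

lemma chain_line:
  fixes g :: "real^'n::finite \<Rightarrow> real"
  assumes C: "C1 g U" and y: "y + t *\<^sub>R v \<in> U"
  shows "((\<lambda>t. g (y + t *\<^sub>R v)) has_field_derivative (\<Sum>i\<in>UNIV. v$i * pd i g (y + t *\<^sub>R v))) (at t)"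
proof -
  have i: "((\<lambda>t. y + t *\<^sub>R v) has_derivative (\<lambda>t. t *\<^sub>R v)) (at t)"
    by (auto intro!: derivative_eq_intros)
  from has_derivative_compose[OF i frechet[OF C y]]
  have "((\<lambda>t. g (y + t *\<^sub>R v)) has_derivative (\<lambda>s. \<Sum>i\<in>UNIV. (s *\<^sub>R v)$i * pd i g (y + t *\<^sub>R v))) (at t)" .
  moreover have "(\<lambda>s. \<Sum>i\<in>UNIV. (s *\<^sub>R v)$i * pd i g (y + t *\<^sub>R v)) = (*) (\<Sum>i\<in>UNIV. v$i * pd i g (y + t *\<^sub>R v))"
    by (rule ext) (simp add: sum_distrib_left mult_ac)
  ultimately show ?thesis by (simp add: has_field_derivative_def)
qed



lemma pds_append: "pds (xs @ ys) g = pds xs (pds ys g)"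
  by (induction xs) auto

lemma cont_nbhd:
  fixes F :: "'j \<Rightarrow> real^'n::finite \<Rightarrow> real"
  assumes U: "open U" "x \<in> U" and J: "finite J" and c: "\<forall>j\<in>J. continuous_on U (F j)" and e: "e > 0"
  shows "\<exists>d>0. \<forall>z. dist z x < d \<longrightarrow> z \<in> U \<and> (\<forall>j\<in>J. \<bar>F j z - F j x\<bar> \<le> e)"
proof -
  have ev1: "\<forall>\<^sub>F z in at x. \<forall>j\<in>J. dist (F j z) (F j x) < e"
  proof (rule eventually_ball_finite[OF J], rule ballI)
    fix j assume "j \<in> J"
    then have "isCont (F j) x"
      using c U by (simp add: continuous_on_eq_continuous_at)
    then show "\<forall>\<^sub>F z in at x. dist (F j z) (F j x) < e"
      using e by (simp add: isCont_def tendsto_iff)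
  qed
  have ev2: "\<forall>\<^sub>F z in at x. z \<in> U"
    using U eventually_at_topological by blast
  have "\<exists>d>0. \<forall>z\<in>UNIV. z \<noteq> x \<and> dist z x < d \<longrightarrow> (\<forall>j\<in>J. dist (F j z) (F j x) < e) \<and> z \<in> U"
    using eventually_conj[OF ev1 ev2] unfolding eventually_at .
  then obtain d where d: "d > 0"
    and dP: "\<And>z. z \<noteq> x \<Longrightarrow> dist z x < d \<Longrightarrow> (\<forall>j\<in>J. dist (F j z) (F j x) < e) \<and> z \<in> U"
    by blast
  have "z \<in> U \<and> (\<forall>j\<in>J. \<bar>F j z - F j x\<bar> \<le> e)" if "dist z x < d" for z
  proof (cases "z = x")
    case True then show ?thesis using U e by simp
  next
    case False
    from dP[OF False that] show ?thesis by (auto simp: dist_real_def less_imp_le)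
  qed
  then show ?thesis using d by blast
qed

lemma line_deriv:
  fixes g :: "real^'n::finite \<Rightarrow> real"
  assumes C: "\<forall>ks. length ks = j \<longrightarrow> C1 (pds ks g) U" and y: "y + t *\<^sub>R v \<in> U"
  shows "((\<lambda>t. PP (\<lambda>ks. pds ks g (y + t *\<^sub>R v)) j v) has_field_derivative
            PP (\<lambda>ks. pds ks g (y + t *\<^sub>R v)) (Suc j) v) (at t)"
proof -
  have "((\<lambda>t. \<Sum>ks\<in>{ks::'n list. length ks = j}. pds ks g (y + t *\<^sub>R v) * (\<Prod>l<j. v $ (ks!l)))
      has_field_derivative
      (\<Sum>ks\<in>{ks::'n list. length ks = j}. (\<Sum>i\<in>UNIV. v$i * pd i (pds ks g) (y + t *\<^sub>R v)) * (\<Prod>l<j. v $ (ks!l)))) (at t)"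
  proof (rule DERIV_sum)
    fix ks :: "'n list" assume "ks \<in> {ks. length ks = j}"
    then have "C1 (pds ks g) U" using C by simp
    from chain_line[OF this y]
    show "((\<lambda>t. pds ks g (y + t *\<^sub>R v) * (\<Prod>l<j. v $ (ks!l))) has_field_derivative
      (\<Sum>i\<in>UNIV. v$i * pd i (pds ks g) (y + t *\<^sub>R v)) * (\<Prod>l<j. v $ (ks!l))) (at t)"
      by (rule DERIV_cong[OF DERIV_mult[OF _ DERIV_const]]) simp_all
  qed
  moreover have "(\<Sum>ks\<in>{ks::'n list. length ks = j}. (\<Sum>i\<in>UNIV. v$i * pd i (pds ks g) (y + t *\<^sub>R v)) * (\<Prod>l<j. v $ (ks!l)))
      = PP (\<lambda>ks. pds ks g (y + t *\<^sub>R v)) (Suc j) v"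
    unfolding PP_Suc unfolding PP_def
    by (simp add: sum_distrib_left sum_distrib_right mult_ac sum.swap[of _ UNIV])
  ultimately show ?thesis unfolding PP_def by simp
qed

lemma taylor_line:
  fixes g :: "real^'n::finite \<Rightarrow> real"
  assumes C: "\<forall>ks. length ks < k \<longrightarrow> C1 (pds ks g) U" and k: "k > 0"
    and seg: "\<forall>t. 0 \<le> t \<and> t \<le> 1 \<longrightarrow> y + t *\<^sub>R v \<in> U"
  shows "\<exists>s. 0 < s \<and> s < 1 \<and> g (y + v) =
     (\<Sum>m<k. PP (\<lambda>ks. pds ks g y) m v / fact m) + PP (\<lambda>ks. pds ks g (y + s *\<^sub>R v)) k v / fact k"
proof -
  define diff where "diff m t = PP (\<lambda>ks. pds ks g (y + t *\<^sub>R v)) m v" for m t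
  have d0: "diff 0 = (\<lambda>t. g (y + t *\<^sub>R v))" by (rule ext) (simp add: diff_def)
  have dd: "\<forall>m t. m < k \<and> 0 \<le> t \<and> t \<le> 1 \<longrightarrow> DERIV (diff m) t :> diff (Suc m) t"
  proof (intro allI impI)
    fix m :: nat and t :: real assume h: "m < k \<and> 0 \<le> t \<and> t \<le> 1"
    have "\<forall>ks. length ks = m \<longrightarrow> C1 (pds ks g) U" using C h by auto
    from line_deriv[OF this, of y t v] seg h
    show "DERIV (diff m) t :> diff (Suc m) t" unfolding diff_def by auto
  qed
  from Taylor_up[OF k d0 dd, of 0] obtain s where "0 < s" "s < 1"
    "g (y + 1 *\<^sub>R v) = (\<Sum>m<k. diff m 0 / fact m * (1 - 0) ^ m) + diff k s / fact k * (1 - 0) ^ k"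
    by auto
  then show ?thesis unfolding diff_def by (intro exI[of _ s]) simp
qed

lemma schwarz_half:
  fixes g :: "real^'n::finite \<Rightarrow> real"
  assumes da: "\<forall>z\<in>U. (\<lambda>t. g (z + t *\<^sub>R axis a 1)) differentiable (at 0)"
    and dba: "\<forall>z\<in>U. (\<lambda>t. pd a g (z + t *\<^sub>R axis b 1)) differentiable (at 0)"
    and inU: "\<forall>\<sigma> \<tau>. \<bar>\<sigma>\<bar> \<le> \<bar>s\<bar> \<and> \<bar>\<tau>\<bar> \<le> \<bar>s\<bar> \<longrightarrow> x + \<sigma> *\<^sub>R axis a 1 + \<tau> *\<^sub>R axis b 1 \<in> U"
  shows "\<exists>\<sigma> \<tau>. \<bar>\<sigma>\<bar> \<le> \<bar>s\<bar> \<and> \<bar>\<tau>\<bar> \<le> \<bar>s\<bar> \<and>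
     g (x + s *\<^sub>R axis a 1 + s *\<^sub>R axis b 1) - g (x + s *\<^sub>R axis a 1) - g (x + s *\<^sub>R axis b 1) + g x
       = s * s * pd b (pd a g) (x + \<sigma> *\<^sub>R axis a 1 + \<tau> *\<^sub>R axis b 1)"
proof -
  define u where "u \<sigma> = g (x + s *\<^sub>R axis b 1 + \<sigma> *\<^sub>R axis a 1) - g (x + \<sigma> *\<^sub>R axis a 1)" for \<sigma>
  have du: "(u has_field_derivative (pd a g (x + s *\<^sub>R axis b 1 + \<sigma> *\<^sub>R axis a 1) - pd a g (x + \<sigma> *\<^sub>R axis a 1))) (at \<sigma>)"
    if "\<bar>\<sigma>\<bar> \<le> \<bar>s\<bar>" for \<sigma>
  proof -
    have 1: "x + s *\<^sub>R axis b 1 + \<sigma> *\<^sub>R axis a 1 \<in> U"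
      using inU[rule_format, of \<sigma> s] that by (simp add: add_ac)
    have 2: "x + \<sigma> *\<^sub>R axis a 1 \<in> U"
      using inU[rule_format, of \<sigma> 0] that by simp
    show ?thesis unfolding u_def
      by (rule DERIV_diff; rule pd_DERIV[OF da]) (use 1 2 in auto)
  qed
  from mvt_sym[of s u, OF du] obtain \<sigma> where s1: "\<bar>\<sigma>\<bar> \<le> \<bar>s\<bar>"
    and e1: "u s - u 0 = s * (pd a g (x + s *\<^sub>R axis b 1 + \<sigma> *\<^sub>R axis a 1) - pd a g (x + \<sigma> *\<^sub>R axis a 1))"
    by blast
  define w where "w \<tau> = pd a g (x + \<sigma> *\<^sub>R axis a 1 + \<tau> *\<^sub>R axis b 1)" for \<tau>
  have dw: "(w has_field_derivative pd b (pd a g) (x + \<sigma> *\<^sub>R axis a 1 + \<tau> *\<^sub>R axis b 1)) (at \<tau>)"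
    if "\<bar>\<tau>\<bar> \<le> \<bar>s\<bar>" for \<tau>
    unfolding w_def
    by (rule pd_DERIV[OF dba]) (use inU s1 that in auto)
  from mvt_sym[of s w, OF dw] obtain \<tau> where s2: "\<bar>\<tau>\<bar> \<le> \<bar>s\<bar>"
    and e2: "w s - w 0 = s * pd b (pd a g) (x + \<sigma> *\<^sub>R axis a 1 + \<tau> *\<^sub>R axis b 1)"
    by blast
  have "g (x + s *\<^sub>R axis a 1 + s *\<^sub>R axis b 1) - g (x + s *\<^sub>R axis a 1) - g (x + s *\<^sub>R axis b 1) + g x
      = u s - u 0" by (simp add: u_def add_ac)
  also have "\<dots> = s * (w s - w 0)" using e1 by (simp add: w_def add_ac)
  also have "\<dots> = s * s * pd b (pd a g) (x + \<sigma> *\<^sub>R axis a 1 + \<tau> *\<^sub>R axis b 1)"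
    using e2 by simp
  finally show ?thesis using s1 s2 by blast
qed

lemma schwarz:
  fixes g :: "real^'n::finite \<Rightarrow> real"
  assumes U: "open U" "x \<in> U"
    and da: "\<forall>z\<in>U. (\<lambda>t. g (z + t *\<^sub>R axis a 1)) differentiable (at 0)"
    and db: "\<forall>z\<in>U. (\<lambda>t. g (z + t *\<^sub>R axis b 1)) differentiable (at 0)"
    and dba: "\<forall>z\<in>U. (\<lambda>t. pd a g (z + t *\<^sub>R axis b 1)) differentiable (at 0)"
    and dab: "\<forall>z\<in>U. (\<lambda>t. pd b g (z + t *\<^sub>R axis a 1)) differentiable (at 0)"
    and cba: "continuous_on U (pd b (pd a g))"
    and cab: "continuous_on U (pd a (pd b g))"
  shows "pd b (pd a g) x = pd a (pd b g) x"
proof (rule ccontr)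
  assume ne: "pd b (pd a g) x \<noteq> pd a (pd b g) x"
  define e where "e = \<bar>pd b (pd a g) x - pd a (pd b g) x\<bar> / 3"
  have e: "e > 0" using ne by (simp add: e_def)
  define F where "F j = (if j then pd b (pd a g) else pd a (pd b g))" for j :: bool
  have "\<forall>j\<in>UNIV. continuous_on U (F j)" using cba cab by (simp add: F_def)
  moreover have "finite (UNIV::bool set)" by simp
  ultimately have "\<exists>d>0. \<forall>z. dist z x < d \<longrightarrow> z \<in> U \<and> (\<forall>j\<in>UNIV. \<bar>F j z - F j x\<bar> \<le> e)"
    using cont_nbhd[OF U _ _ e] by blast
  then obtain d where d: "d > 0"
    and dP: "\<And>z. dist z x < d \<Longrightarrow> z \<in> U \<and> (\<forall>j. \<bar>F j z - F j x\<bar> \<le> e)"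
    by blast
  define s where "s = d / 3"
  have s: "s > 0" using d by (simp add: s_def)
  have near: "dist (x + \<sigma> *\<^sub>R axis i 1 + \<tau> *\<^sub>R axis j 1) x < d"
    if "\<bar>\<sigma>\<bar> \<le> \<bar>s\<bar>" "\<bar>\<tau>\<bar> \<le> \<bar>s\<bar>" for \<sigma> \<tau> i j
  proof -
    have "norm (\<sigma> *\<^sub>R axis i (1::real) + \<tau> *\<^sub>R axis j 1) \<le> norm (\<sigma> *\<^sub>R axis i (1::real)) + norm (\<tau> *\<^sub>R axis j (1::real))"
      by (rule norm_triangle_ineq)
    also have "\<dots> = \<bar>\<sigma>\<bar> + \<bar>\<tau>\<bar>" by simp
    finally show ?thesis using that s d by (simp add: dist_norm s_def add_ac)
  qed
  have inU: "\<forall>\<sigma> \<tau>. \<bar>\<sigma>\<bar> \<le> \<bar>s\<bar> \<and> \<bar>\<tau>\<bar> \<le> \<bar>s\<bar> \<longrightarrow> x + \<sigma> *\<^sub>R axis i 1 + \<tau> *\<^sub>R axis j 1 \<in> U" for i j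
    using near dP by blast
  obtain \<sigma>1 \<tau>1 where h1: "\<bar>\<sigma>1\<bar> \<le> \<bar>s\<bar>" "\<bar>\<tau>1\<bar> \<le> \<bar>s\<bar>"
    "g (x + s *\<^sub>R axis a 1 + s *\<^sub>R axis b 1) - g (x + s *\<^sub>R axis a 1) - g (x + s *\<^sub>R axis b 1) + g x
       = s * s * pd b (pd a g) (x + \<sigma>1 *\<^sub>R axis a 1 + \<tau>1 *\<^sub>R axis b 1)"
    using schwarz_half[OF da dba inU] by blast
  obtain \<sigma>2 \<tau>2 where h2: "\<bar>\<sigma>2\<bar> \<le> \<bar>s\<bar>" "\<bar>\<tau>2\<bar> \<le> \<bar>s\<bar>"
    "g (x + s *\<^sub>R axis b 1 + s *\<^sub>R axis a 1) - g (x + s *\<^sub>R axis b 1) - g (x + s *\<^sub>R axis a 1) + g x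
       = s * s * pd a (pd b g) (x + \<sigma>2 *\<^sub>R axis b 1 + \<tau>2 *\<^sub>R axis a 1)"
    using schwarz_half[OF db dab inU] by blast
  have "s * s * pd b (pd a g) (x + \<sigma>1 *\<^sub>R axis a 1 + \<tau>1 *\<^sub>R axis b 1)
      = s * s * pd a (pd b g) (x + \<sigma>2 *\<^sub>R axis b 1 + \<tau>2 *\<^sub>R axis a 1)"
  proof -
    have "g (x + s *\<^sub>R axis b 1 + s *\<^sub>R axis a 1) = g (x + s *\<^sub>R axis a 1 + s *\<^sub>R axis b 1)"
      by (simp add: add_ac)
    then show ?thesis using h1(3) h2(3) by linarith
  qed
  then have eq: "pd b (pd a g) (x + \<sigma>1 *\<^sub>R axis a 1 + \<tau>1 *\<^sub>R axis b 1)
      = pd a (pd b g) (x + \<sigma>2 *\<^sub>R axis b 1 + \<tau>2 *\<^sub>R axis a 1)"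
    using s by simp
  have b1: "\<bar>pd b (pd a g) (x + \<sigma>1 *\<^sub>R axis a 1 + \<tau>1 *\<^sub>R axis b 1) - pd b (pd a g) x\<bar> \<le> e"
    using dP[OF near[OF h1(1,2)]] by (metis F_def)
  have b2: "\<bar>pd a (pd b g) (x + \<sigma>2 *\<^sub>R axis b 1 + \<tau>2 *\<^sub>R axis a 1) - pd a (pd b g) x\<bar> \<le> e"
    using dP[OF near[OF h2(1,2)]] by (metis F_def)
  have "\<bar>pd b (pd a g) x - pd a (pd b g) x\<bar> \<le> 2 * e"
    using b1 b2 eq by linarith
  then show False using e by (simp add: e_def)
qed



lemma pd_local:
  fixes g1 g2 :: "real^'n::finite \<Rightarrow> real"
  assumes U: "open U" "x \<in> U" and eq: "\<forall>z\<in>U. g1 z = g2 z"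
  shows "pd i g1 x = pd i g2 x"
proof -
  obtain e where e: "e > 0" "ball x e \<subseteq> U" using U openE by blast
  have "eventually (\<lambda>s. g1 (x + s *\<^sub>R axis i 1) = g2 (x + s *\<^sub>R axis i 1)) (nhds (0::real))"
    unfolding eventually_nhds_metric
  proof (intro exI[of _ e] conjI allI impI)
    show "e > 0" by fact
    fix s :: real assume "dist s 0 < e"
    then have "x + s *\<^sub>R axis i 1 \<in> ball x e" by (simp add: dist_norm)
    then show "g1 (x + s *\<^sub>R axis i 1) = g2 (x + s *\<^sub>R axis i 1)" using e eq by blast
  qed
  then show ?thesis unfolding pd_def by (rule deriv_cong_ev) simp
qed

lemma pds_local:
  fixes g1 g2 :: "real^'n::finite \<Rightarrow> real"
  assumes U: "open U" and eq: "\<forall>z\<in>U. g1 z = g2 z"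
  shows "\<forall>z\<in>U. pds p g1 z = pds p g2 z"
proof (induction p)
  case Nil then show ?case using eq by simp
next
  case (Cons a p)
  then show ?case using pd_local[OF U] by simp
qed

lemma Cr_C1:
  assumes "Cr_on r f U" "length ks < r"
  shows "C1 (pds ks f) U"
  using assms unfolding Cr_on_def C1_def
  by (metis Suc_le_eq length_Cons pds.simps(2))

lemma Cr_sym:
  fixes f :: "real^'n::finite \<Rightarrow> real"
  assumes Cr: "Cr_on r f U" and x: "x \<in> U"
  shows "SymK r (\<lambda>ks. pds ks f x)"
  unfolding SymK_def
proof (intro allI impI)
  fix p s :: "'n list" and a b :: 'n
  assume l: "length p + length s + 2 \<le> r"
  have U: "open U" using Cr by (simp add: Cr_on_def)
  define g where "g = pds s f"
  have c1: "C1 g U" using Cr_C1[OF Cr, of s] l by (simp add: g_def)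
  have c1a: "C1 (pd a g) U" using Cr_C1[OF Cr, of "a#s"] l by (simp add: g_def)
  have c1b: "C1 (pd b g) U" using Cr_C1[OF Cr, of "b#s"] l by (simp add: g_def)
  have cont: "continuous_on U (pds ks f)" if "length ks \<le> r" for ks
    using Cr that by (simp add: Cr_on_def)
  have "\<forall>z\<in>U. pd b (pd a g) z = pd a (pd b g) z"
  proof
    fix z assume z: "z \<in> U"
    show "pd b (pd a g) z = pd a (pd b g) z"
    proof (rule schwarz[OF U z])
      show "\<forall>z\<in>U. (\<lambda>t. g (z + t *\<^sub>R axis a 1)) differentiable (at 0)" using c1 by (simp add: C1_def)
      show "\<forall>z\<in>U. (\<lambda>t. g (z + t *\<^sub>R axis b 1)) differentiable (at 0)" using c1 by (simp add: C1_def)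
      show "\<forall>z\<in>U. (\<lambda>t. pd a g (z + t *\<^sub>R axis b 1)) differentiable (at 0)" using c1a by (simp add: C1_def)
      show "\<forall>z\<in>U. (\<lambda>t. pd b g (z + t *\<^sub>R axis a 1)) differentiable (at 0)" using c1b by (simp add: C1_def)
      show "continuous_on U (pd b (pd a g))" using cont[of "b#a#s"] l by (simp add: g_def)
      show "continuous_on U (pd a (pd b g))" using cont[of "a#b#s"] l by (simp add: g_def)
    qed
  qed
  from pds_local[OF U this, of p] x
  have "pds p (pd b (pd a g)) x = pds p (pd a (pd b g)) x" by blast
  then show "pds (p @ a # b # s) f x = pds (p @ b # a # s) f x"
    by (simp add: pds_append g_def)
qed

lemma SymK_mono: "SymK k c \<Longrightarrow> j \<le> k \<Longrightarrow> SymK j c"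
  unfolding SymK_def by auto

lemma taylor_PP:
  "taylor k f xb x = (\<Sum>j\<le>k. PP (\<lambda>ks. pds ks f xb) j (x - xb) / fact j)"
  unfolding taylor_def PP_def
  by (simp add: sum_divide_distrib sum_distrib_left)

lemma T_eq:
  assumes low: "\<forall>x. taylor m f xb x = f xb"
  shows "taylor (Suc m) f xb x = f xb + PP (\<lambda>ks. pds ks f xb) (Suc m) (x - xb) / fact (Suc m)"
  using low[rule_format, of x] unfolding taylor_PP by simp

definition Gv :: "('n::finite list \<Rightarrow> real) \<Rightarrow> nat \<Rightarrow> real^'n \<Rightarrow> real^'n" where
  "Gv c m v = (\<chi> i. PP (\<lambda>ks. c (ks @ [i])) m v / fact m)"

lemma H_deriv:
  fixes c :: "'n::finite list \<Rightarrow> real"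
  assumes "SymK (Suc m) c"
  shows "((\<lambda>s. PP c (Suc m) (v + s *\<^sub>R axis i 1) / fact (Suc m)) has_field_derivative Gv c m v $ i) (at 0)"
proof -
  have "((\<lambda>s. PP c (Suc m) (v + s *\<^sub>R axis i 1) / fact (Suc m)) has_field_derivative
      real (Suc m) * PP (\<lambda>xs. c (xs @ [i])) m v / fact (Suc m)) (at 0)"
    by (rule DERIV_cdivide[OF PP_deriv[OF assms]])
  moreover have "real (Suc m) * PP (\<lambda>xs. c (xs @ [i])) m v / fact (Suc m) = Gv c m v $ i"
    by (simp add: Gv_def fact_Suc del: of_nat_Suc)
  ultimately show ?thesis by simp
qed

lemma gradT:
  fixes f :: "real^'n::finite \<Rightarrow> real"
  assumes low: "\<forall>x. taylor m f xb x = f xb" and sym: "SymK (Suc m) (\<lambda>ks. pds ks f xb)"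
  shows "grad (taylor (Suc m) f xb) x = Gv (\<lambda>ks. pds ks f xb) m (x - xb)"
proof -
  have "pd i (taylor (Suc m) f xb) x = Gv (\<lambda>ks. pds ks f xb) m (x - xb) $ i" for i
  proof -
    have e: "(\<lambda>s. taylor (Suc m) f xb (x + s *\<^sub>R axis i 1)) =
        (\<lambda>s. f xb + PP (\<lambda>ks. pds ks f xb) (Suc m) ((x - xb) + s *\<^sub>R axis i 1) / fact (Suc m))"
      by (rule ext) (simp add: T_eq[OF low] algebra_simps)
    have "((\<lambda>s. f xb + PP (\<lambda>ks. pds ks f xb) (Suc m) ((x - xb) + s *\<^sub>R axis i 1) / fact (Suc m))
        has_field_derivative 0 + Gv (\<lambda>ks. pds ks f xb) m (x - xb) $ i) (at 0)"
      by (rule DERIV_add[OF DERIV_const H_deriv[OF sym]])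
    then show ?thesis unfolding pd_def e by (simp add: DERIV_imp_deriv)
  qed
  then show ?thesis by (simp add: grad_def vec_eq_iff)
qed



lemma PPzero:
  fixes f :: "real^'n::finite \<Rightarrow> real"
  assumes low: "\<forall>x. taylor m f xb x = f xb" and j: "1 \<le> j" "j \<le> m"
  shows "PP (\<lambda>ks. pds ks f xb) j v = 0"
proof -
  define c where "c = (\<lambda>ks. pds ks f xb)"
  define a where "a j = (if j = 0 then 0 else PP c j v / fact j)" for j
  have "(\<Sum>j\<le>m. a j * t^j) = 0" for t :: real
  proof -
    have "f xb = (\<Sum>j\<le>m. PP c j (t *\<^sub>R v) / fact j)"
      using low[rule_format, of "xb + t *\<^sub>R v"] unfolding taylor_PP c_def by simp
    also have "\<dots> = (\<Sum>j\<le>m. a j * t^j + (if j = 0 then f xb else 0))"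
      by (rule sum.cong) (auto simp: a_def PP_scale c_def)
    also have "\<dots> = (\<Sum>j\<le>m. a j * t^j) + f xb"
      by (simp add: sum.distrib)
    finally show ?thesis by simp
  qed
  then have "\<forall>i\<le>m. a i = 0" using polyfun_eq_0[of a m] by blast
  then show ?thesis using j by (auto simp: a_def c_def)
qed

lemma lowzero:
  fixes f :: "real^'n::finite \<Rightarrow> real"
  assumes low: "\<forall>x. taylor m f xb x = f xb" and sym: "SymK m (\<lambda>ks. pds ks f xb)" and j: "j < m"
  shows "PP (\<lambda>ks. pds (ks @ [i]) f xb) j v = 0"
proof -
  have s: "SymK (Suc j) (\<lambda>ks. pds ks f xb)" using SymK_mono[OF sym] j by simp
  have d: "((\<lambda>s. PP (\<lambda>ks. pds ks f xb) (Suc j) (v + s *\<^sub>R axis i 1)) has_field_derivative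
       real (Suc j) * PP (\<lambda>ks. pds (ks @ [i]) f xb) j v) (at 0)"
    using PP_deriv[OF s] by simp
  have z: "(\<lambda>s. PP (\<lambda>ks. pds ks f xb) (Suc j) (v + s *\<^sub>R axis i 1)) = (\<lambda>s. 0)"
    by (rule ext) (rule PPzero[OF low], use j in auto)
  have "real (Suc j) * PP (\<lambda>ks. pds (ks @ [i]) f xb) j v = 0"
    using DERIV_unique[OF d[unfolded z] DERIV_const] .
  then show ?thesis by simp
qed

lemma Gv_scale: "Gv c m (t *\<^sub>R v) = t^m *\<^sub>R Gv c m v"
  by (simp add: Gv_def vec_eq_iff PP_scale)

lemma Gv_cont: "continuous_on S (Gv c m)"
  unfolding Gv_def by (intro continuous_intros PP_cont) simp

lemma Gv_0: "Gv c 0 v = (\<chi> i. c [i])"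
  by (simp add: Gv_def)

lemma sphere_min:
  fixes F :: "real^'n::finite \<Rightarrow> real"
  assumes cont: "continuous_on (sphere 0 1) F" and pos: "\<forall>u\<in>sphere 0 1. F u > 0"
  shows "\<exists>c>0. \<forall>u\<in>sphere 0 1. F u \<ge> c"
proof -
  have ne: "sphere (0::real^'n) 1 \<noteq> {}"
  proof -
    have "axis undefined (1::real) \<in> sphere (0::real^'n) 1" by simp
    then show ?thesis by blast
  qed
  from continuous_attains_inf[OF compact_sphere ne cont] obtain u0 where
    "u0 \<in> sphere 0 1" "\<forall>y\<in>sphere 0 1. F u0 \<le> F y" by blast
  then show ?thesis using pos by (intro exI[of _ "F u0"]) auto
qed

lemma homog_bound:
  fixes F :: "real^'n::finite \<Rightarrow> real"
  assumes c: "\<forall>u\<in>sphere 0 1. F u \<ge> c" and h: "\<And>t v. t \<ge> 0 \<Longrightarrow> F (t *\<^sub>R v) = t^k * F v"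
    and k: "k \<ge> 1"
  shows "F v \<ge> c * norm v ^ k"
proof (cases "v = 0")
  case True
  have "F 0 = 0" using h[of 0 0] k by (simp add: power_0_left)
  then show ?thesis using True k by (simp add: power_0_left)
next
  case False
  define u where "u = (1 / norm v) *\<^sub>R v"
  have u: "u \<in> sphere 0 1" using False by (simp add: u_def)
  have "v = norm v *\<^sub>R u" using False by (simp add: u_def)
  then have "F v = norm v ^ k * F u" using h[of "norm v" u] by simp
  also have "\<dots> \<ge> norm v ^ k * c" using c u by (intro mult_left_mono) auto
  finally show ?thesis by (simp add: mult_ac)
qed



lemma pds_snoc: "pds (ks @ [i]) f = pds ks (pd i f)"
  by (simp add: pds_append)

lemma abs_div_le: assumes "1 \<le> (F::real)" shows "\<bar>a\<bar> / F \<le> \<bar>a\<bar>"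
  using divide_left_mono[of 1 F "\<bar>a\<bar>"] assms by simp

lemma approx:
  fixes f :: "real^'n::finite \<Rightarrow> real"
  assumes Cr: "Cr_on (Suc m) f U" and xb: "xb \<in> U"
    and low: "\<forall>x. taylor m f xb x = f xb" and m: "m \<ge> 1" and eps: "\<epsilon> > 0"
  shows "\<exists>\<delta>>0. \<forall>x. norm (x - xb) \<le> \<delta> \<longrightarrow>
     \<bar>f x - f xb - PP (\<lambda>ks. pds ks f xb) (Suc m) (x - xb) / fact (Suc m)\<bar> \<le> \<epsilon> * norm (x - xb) ^ Suc m
     \<and> (\<forall>i. \<bar>pd i f x - Gv (\<lambda>ks. pds ks f xb) m (x - xb) $ i\<bar> \<le> \<epsilon> * norm (x - xb) ^ m)"
proof -
  define c where "c = (\<lambda>ks. pds ks f xb)"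
  define N where "N = real (card {ks::'n list. length ks = Suc m})"
  define N' where "N' = real (card {ks::'n list. length ks = m})"
  define e where "e = \<epsilon> / (N + N' + 1)"
  have N0: "N \<ge> 0" "N' \<ge> 0" by (simp_all add: N_def N'_def)
  have e: "e > 0" using eps N0 by (simp add: e_def)
  have Ne: "N * e \<le> \<epsilon>" "N' * e \<le> \<epsilon>"
    using eps N0 by (auto simp: e_def field_simps)
  have oU: "open U" using Cr by (simp add: Cr_on_def)
  have contJ: "\<forall>ks\<in>{ks::'n list. length ks = Suc m}. continuous_on U (pds ks f)"
    using Cr by (simp add: Cr_on_def)
  from cont_nbhd[OF oU xb finite_len contJ e] obtain d where d: "d > 0"
    and dP: "\<And>z. dist z xb < d \<Longrightarrow> z \<in> U \<and> (\<forall>ks\<in>{ks::'n list. length ks = Suc m}. \<bar>pds ks f z - pds ks f xb\<bar> \<le> e)"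
    by blast
  have sym: "SymK (Suc m) c" unfolding c_def by (rule Cr_sym[OF Cr xb])
  show ?thesis
  proof (intro exI[of _ "d/2"] conjI allI impI)
    show "d / 2 > 0" using d by simp
    fix x assume nx: "norm (x - xb) \<le> d / 2"
    define v where "v = x - xb"
    have x: "x = xb + v" by (simp add: v_def)
    have near: "dist (xb + t *\<^sub>R v) xb < d" if "0 \<le> t" "t \<le> 1" for t
    proof -
      have "norm (t *\<^sub>R v) \<le> norm v" using that by (simp add: mult_left_le_one_le)
      then show ?thesis using nx d by (simp add: dist_norm v_def)
    qed
    have seg: "\<forall>t. 0 \<le> t \<and> t \<le> 1 \<longrightarrow> xb + t *\<^sub>R v \<in> U" using near dP by blast
    have Cf: "\<forall>ks. length ks < Suc m \<longrightarrow> C1 (pds ks f) U" using Cr_C1[OF Cr] by blast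
    from taylor_line[OF Cf _ seg] obtain s where s: "0 < s" "s < 1"
      and tf: "f (xb + v) = (\<Sum>j<Suc m. PP c j v / fact j) + PP (\<lambda>ks. pds ks f (xb + s *\<^sub>R v)) (Suc m) v / fact (Suc m)"
      unfolding c_def by blast
    have "(\<Sum>j<Suc m. PP c j v / fact j) = f xb"
      using low[rule_format, of "xb + v"] unfolding taylor_PP c_def lessThan_Suc_atMost by simp
    with tf have fx: "f x - f xb - PP c (Suc m) v / fact (Suc m)
        = (PP (\<lambda>ks. pds ks f (xb + s *\<^sub>R v)) (Suc m) v - PP c (Suc m) v) / fact (Suc m)"
      by (simp add: x diff_divide_distrib)
    have bd: "\<bar>PP (\<lambda>ks. pds ks f (xb + s *\<^sub>R v)) (Suc m) v - PP c (Suc m) v\<bar> \<le> N * e * norm v ^ Suc m"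
      unfolding N_def
      by (rule PP_diff_bound) (use dP[OF near[of s]] s in \<open>auto simp: c_def\<close>)
    have f1: "fact (Suc m) \<ge> (1::real)" by (rule fact_ge_1)
    have "\<bar>f x - f xb - PP c (Suc m) v / fact (Suc m)\<bar> \<le> N * e * norm v ^ Suc m"
    proof -
      have "\<bar>f x - f xb - PP c (Suc m) v / fact (Suc m)\<bar>
          = \<bar>PP (\<lambda>ks. pds ks f (xb + s *\<^sub>R v)) (Suc m) v - PP c (Suc m) v\<bar> / fact (Suc m)"
        unfolding fx by simp
      also have "\<dots> \<le> \<bar>PP (\<lambda>ks. pds ks f (xb + s *\<^sub>R v)) (Suc m) v - PP c (Suc m) v\<bar>"
        by (rule abs_div_le[OF f1])
      finally show ?thesis using bd by linarith
    qed
    also have "\<dots> \<le> \<epsilon> * norm v ^ Suc m"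
      using Ne by (intro mult_right_mono) auto
    finally show "\<bar>f x - f xb - PP (\<lambda>ks. pds ks f xb) (Suc m) (x - xb) / fact (Suc m)\<bar> \<le> \<epsilon> * norm (x - xb) ^ Suc m"
      by (simp add: v_def c_def)
    fix i
    have Ci: "\<forall>ks. length ks < m \<longrightarrow> C1 (pds ks (pd i f)) U"
      using Cr_C1[OF Cr] by (metis pds_snoc length_append_singleton Suc_mono)
    from taylor_line[OF Ci _ seg] m obtain s where s: "0 < s" "s < 1"
      and tg: "pd i f (xb + v) = (\<Sum>j<m. PP (\<lambda>ks. pds ks (pd i f) xb) j v / fact j)
          + PP (\<lambda>ks. pds ks (pd i f) (xb + s *\<^sub>R v)) m v / fact m"
      by auto
    have "(\<Sum>j<m. PP (\<lambda>ks. pds ks (pd i f) xb) j v / fact j) = 0"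
    proof (rule sum.neutral, rule ballI)
      fix j assume "j \<in> {..<m}"
      then have "PP (\<lambda>ks. pds (ks @ [i]) f xb) j v = 0"
        using lowzero[OF low SymK_mono[OF sym[unfolded c_def]]] by simp
      then show "PP (\<lambda>ks. pds ks (pd i f) xb) j v / fact j = 0" by (simp add: pds_snoc)
    qed
    with tg have gx: "pd i f x - Gv c m v $ i
        = (PP (\<lambda>ks. pds (ks @ [i]) f (xb + s *\<^sub>R v)) m v - PP (\<lambda>ks. pds (ks @ [i]) f xb) m v) / fact m"
      by (simp add: x Gv_def c_def pds_snoc diff_divide_distrib)
    have bd: "\<bar>PP (\<lambda>ks. pds (ks @ [i]) f (xb + s *\<^sub>R v)) m v - PP (\<lambda>ks. pds (ks @ [i]) f xb) m v\<bar> \<le> N' * e * norm v ^ m"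
      unfolding N'_def
      by (rule PP_diff_bound) (use dP[OF near[of s]] s in auto)
    have f1: "fact m \<ge> (1::real)" by (rule fact_ge_1)
    have "\<bar>pd i f x - Gv c m v $ i\<bar> \<le> N' * e * norm v ^ m"
    proof -
      have "\<bar>pd i f x - Gv c m v $ i\<bar>
          = \<bar>PP (\<lambda>ks. pds (ks @ [i]) f (xb + s *\<^sub>R v)) m v - PP (\<lambda>ks. pds (ks @ [i]) f xb) m v\<bar> / fact m"
        unfolding gx by simp
      also have "\<dots> \<le> \<bar>PP (\<lambda>ks. pds (ks @ [i]) f (xb + s *\<^sub>R v)) m v - PP (\<lambda>ks. pds (ks @ [i]) f xb) m v\<bar>"
        by (rule abs_div_le[OF f1])
      finally show ?thesis using bd by linarith
    qed
    also have "\<dots> \<le> \<epsilon> * norm v ^ m"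
      using Ne by (intro mult_right_mono) auto
    finally show "\<bar>pd i f x - Gv (\<lambda>ks. pds ks f xb) m (x - xb) $ i\<bar> \<le> \<epsilon> * norm (x - xb) ^ m"
      by (simp add: v_def c_def)
  qed
qed



theorem corollary3p6:
  fixes f :: "real^'n \<Rightarrow> real" and xb :: "real^'n" and r :: nat
  assumes r: "r \<ge> 1"
    and Cr: "\<exists>U. xb \<in> U \<and> Cr_on r f U"
    and low: "\<forall>x. taylor (r - 1) f xb x = f xb"
    and crit: "\<forall>x. grad (taylor r f xb) x = 0 \<longleftrightarrow> x = xb"
  shows "(\<exists>c>0. \<exists>\<delta>>0. \<forall>x\<in>cball xb \<delta>. norm (grad f x) \<ge> c * norm (x - xb) ^ (r - 1))
       \<and> (local_min_at f xb \<longleftrightarrow> local_min_at (taylor r f xb) xb)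
       \<and> (local_min_at f xb \<longrightarrow>
           (\<exists>\<epsilon>>0. \<forall>h :: real^'n \<Rightarrow> real.
              (\<exists>\<rho>>0. \<forall>x\<in>cball xb \<rho>. \<bar>h x - h xb\<bar> \<le> \<epsilon> * norm (x - xb) ^ r)
              \<longrightarrow> local_min_at (\<lambda>x. f x + h x) xb))"
proof -
  obtain U where xbU: "xb \<in> U" and CrU: "Cr_on r f U" using Cr by blast
  obtain m where rm: "r = Suc m" using r by (cases r) auto
  define c where "c = (\<lambda>ks. pds ks f xb)"
  have low': "\<forall>x. taylor m f xb x = f xb" using low rm by simp
  have sym: "SymK (Suc m) c" using Cr_sym[OF CrU xbU] rm by (simp add: c_def)
  have gT: "\<And>x. grad (taylor r f xb) x = Gv c m (x - xb)"
    using gradT[OF low' sym[unfolded c_def]] rm by (simp add: c_def)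
  have Gz: "Gv c m v = 0 \<longleftrightarrow> v = 0" for v
    using crit[rule_format, of "xb + v"] gT[of "xb + v"] by simp
  have m1: "m \<ge> 1"
  proof (rule ccontr)
    assume "\<not> m \<ge> 1" then have m0: "m = 0" by simp
    have "Gv c 0 0 = 0" using Gz m0 by simp
    then have "Gv c 0 (axis undefined 1) = 0" by (simp add: Gv_0)
    then have "axis undefined (1::real) = (0::real^'n)" using Gz m0 by simp
    then show False by simp
  qed
  define H where "H v = PP c r v / fact r" for v
  have Hscale: "H (t *\<^sub>R v) = t^r * H v" for t v by (simp add: H_def PP_scale)
  have H0: "H 0 = 0" using Hscale[of 0 0] r by (simp add: power_0_left)
  have Tx: "taylor r f xb x = f xb + H (x - xb)" for x
    using T_eq[OF low', of x] rm by (simp add: H_def c_def)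
  have Gbound: "\<exists>c0>0. \<forall>v. norm (Gv c m v) \<ge> c0 * norm v ^ m"
  proof -
    have C: "continuous_on (sphere 0 1) (\<lambda>v. norm (Gv c m v))"
      by (rule continuous_on_norm[OF Gv_cont])
    have P: "\<forall>u\<in>sphere 0 1. norm (Gv c m u) > 0"
    proof
      fix u :: "real^'n" assume "u \<in> sphere 0 1"
      then have "u \<noteq> 0" by auto
      then have "Gv c m u \<noteq> 0" using Gz by blast
      then show "norm (Gv c m u) > 0" by simp
    qed
    from sphere_min[OF C P] obtain c0 where c0: "c0 > 0" "\<forall>u\<in>sphere 0 1. norm (Gv c m u) \<ge> c0"
      by blast
    have "norm (Gv c m v) \<ge> c0 * norm v ^ m" for v
      by (rule homog_bound[OF c0(2) _ m1]) (simp add: Gv_scale)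
    then show ?thesis using c0 by blast
  qed
  have approx': "\<exists>\<delta>>0. \<forall>x. norm (x - xb) \<le> \<delta> \<longrightarrow>
     \<bar>f x - f xb - H (x - xb)\<bar> \<le> \<epsilon> * norm (x - xb) ^ r
     \<and> (\<forall>i. \<bar>pd i f x - Gv c m (x - xb) $ i\<bar> \<le> \<epsilon> * norm (x - xb) ^ m)" if "\<epsilon> > 0" for \<epsilon>
    using approx[OF CrU[unfolded rm] xbU low' m1 that] rm by (simp add: H_def c_def)
  have cb: "norm (x - xb) \<le> \<delta>" if "x \<in> cball xb \<delta>" for x \<delta>
    using that by (simp add: dist_norm norm_minus_commute)
  have P1: "\<exists>c>0. \<exists>\<delta>>0. \<forall>x\<in>cball xb \<delta>. norm (grad f x) \<ge> c * norm (x - xb) ^ (r - 1)"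
  proof -
    obtain c0 where c0: "c0 > 0" "\<forall>v. norm (Gv c m v) \<ge> c0 * norm v ^ m" using Gbound by blast
    define \<epsilon> where "\<epsilon> = c0 / (2 * real CARD('n))"
    have eps: "\<epsilon> > 0" using c0 by (simp add: \<epsilon>_def)
    obtain \<delta> where d: "\<delta> > 0" and dP: "\<And>x. norm (x - xb) \<le> \<delta> \<Longrightarrow>
        (\<forall>i. \<bar>pd i f x - Gv c m (x - xb) $ i\<bar> \<le> \<epsilon> * norm (x - xb) ^ m)"
      using approx'[OF eps] by blast
    have "norm (grad f x) \<ge> (c0 / 2) * norm (x - xb) ^ (r - 1)" if x: "x \<in> cball xb \<delta>" for x
    proof -
      define v where "v = x - xb"
      have "norm (grad f x - Gv c m v) \<le> (\<Sum>i\<in>UNIV. \<bar>(grad f x - Gv c m v) $ i\<bar>)"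
        by (rule norm_le_l1_cart)
      also have "\<dots> \<le> real (card (UNIV::'n set)) * (\<epsilon> * norm v ^ m)"
        by (rule sum_bounded_above) (use dP[OF cb[OF x]] in \<open>simp add: grad_def v_def\<close>)
      also have "\<dots> = c0 / 2 * norm v ^ m" by (simp add: \<epsilon>_def)
      finally have a: "norm (grad f x - Gv c m v) \<le> c0 / 2 * norm v ^ m" .
      have b: "norm (Gv c m v) - norm (grad f x - Gv c m v) \<le> norm (grad f x)"
        using norm_triangle_ineq2[of "Gv c m v" "grad f x"] by (simp add: norm_minus_commute)
      show ?thesis using a b c0(2)[rule_format, of v] rm by (simp add: v_def)
    qed
    then show ?thesis using c0 d by (intro exI[of _ "c0/2"] conjI exI[of _ \<delta>]) auto
  qed
  have minT: "local_min_at (taylor r f xb) xb \<longleftrightarrow> (\<forall>v. H v \<ge> 0)"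
  proof
    assume "local_min_at (taylor r f xb) xb"
    then obtain \<delta> where d: "\<delta> > 0" and dP: "\<forall>x\<in>cball xb \<delta>. taylor r f xb xb \<le> taylor r f xb x"
      unfolding local_min_at_def by blast
    show "\<forall>v. H v \<ge> 0"
    proof
      fix v
      show "H v \<ge> 0"
      proof (cases "v = 0")
        case True then show ?thesis using H0 by simp
      next
        case False
        define t where "t = \<delta> / norm v"
        have t: "t > 0" using d False by (simp add: t_def)
        have "xb + t *\<^sub>R v \<in> cball xb \<delta>" using False d by (simp add: t_def dist_norm)
        then have "taylor r f xb xb \<le> taylor r f xb (xb + t *\<^sub>R v)" using dP by blast
        then have "H (t *\<^sub>R v) \<ge> 0" using Tx[of xb] Tx[of "xb + t *\<^sub>R v"] H0 by simp
        then have "t^r * H v \<ge> 0" by (simp add: Hscale)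
        moreover have "t^r > 0" using t by simp
        ultimately show ?thesis by (simp add: zero_le_mult_iff)
      qed
    qed
  next
    assume "\<forall>v. H v \<ge> 0"
    then show "local_min_at (taylor r f xb) xb"
      unfolding local_min_at_def using Tx H0 by (intro exI[of _ 1]) auto
  qed
  have Hpos: "\<exists>m0>0. \<forall>v. H v \<ge> m0 * norm v ^ r" if Hnn: "\<forall>v. H v \<ge> 0"
  proof -
    have pos: "H v > 0" if v: "v \<noteq> 0" for v
    proof (rule ccontr)
      assume "\<not> H v > 0"
      then have Hv: "H v = 0" using Hnn[rule_format, of v] by linarith
      have "Gv c m v $ i = 0" for i
      proof -
        have d1: "((\<lambda>s. H (v + s *\<^sub>R axis i 1)) has_field_derivative Gv c m v $ i) (at 0)"
          using H_deriv[OF sym, of v i] rm by (simp add: H_def)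
        have d2: "\<forall>y. \<bar>0 - y\<bar> < 1 \<longrightarrow> (\<lambda>s. H (v + s *\<^sub>R axis i 1)) 0 \<le> (\<lambda>s. H (v + s *\<^sub>R axis i 1)) y"
          using Hv Hnn by simp
        show ?thesis by (rule DERIV_local_min[OF d1 zero_less_one d2])
      qed
      then have "Gv c m v = 0" by (simp add: vec_eq_iff)
      then show False using Gz v by simp
    qed
    have "continuous_on (sphere 0 1) H"
      unfolding H_def by (intro continuous_intros PP_cont) simp
    moreover have "\<forall>u\<in>sphere 0 1. H u > 0"
    proof
      fix u :: "real^'n" assume "u \<in> sphere 0 1"
      then have "u \<noteq> 0" by auto
      then show "H u > 0" by (rule pos)
    qed
    ultimately obtain m0 where m0: "m0 > 0" "\<forall>u\<in>sphere 0 1. H u \<ge> m0"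
      using sphere_min[of H] by blast
    have "H v \<ge> m0 * norm v ^ r" for v
      by (rule homog_bound[OF m0(2) _ r]) (simp add: Hscale)
    then show ?thesis using m0 by blast
  qed
  have minf_H: "\<forall>v. H v \<ge> 0" if lm: "local_min_at f xb"
  proof (rule ccontr)
    assume "\<not> (\<forall>v. H v \<ge> 0)"
    then obtain v0 where hv: "H v0 < 0" by (meson not_le)
    have v0: "v0 \<noteq> 0" using hv H0 by auto
    obtain \<delta>1 where d1: "\<delta>1 > 0" and d1P: "\<forall>x\<in>cball xb \<delta>1. f xb \<le> f x"
      using lm unfolding local_min_at_def by blast
    define \<epsilon> where "\<epsilon> = - H v0 / (2 * norm v0 ^ r)"
    have eps: "\<epsilon> > 0" using hv v0 by (simp add: \<epsilon>_def divide_neg_pos)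
    obtain \<delta>2 where d2: "\<delta>2 > 0" and d2P: "\<And>x. norm (x - xb) \<le> \<delta>2 \<Longrightarrow>
        \<bar>f x - f xb - H (x - xb)\<bar> \<le> \<epsilon> * norm (x - xb) ^ r"
      using approx'[OF eps] by blast
    define t where "t = min \<delta>1 \<delta>2 / norm v0"
    have t: "t > 0" using d1 d2 v0 by (simp add: t_def)
    define x where "x = xb + t *\<^sub>R v0"
    have nx: "norm (x - xb) = min \<delta>1 \<delta>2" using v0 t d1 d2 by (simp add: x_def t_def)
    have "f xb \<le> f x" using d1P nx by (simp add: dist_norm norm_minus_commute)
    moreover have "\<bar>f x - f xb - H (t *\<^sub>R v0)\<bar> \<le> \<epsilon> * (t * norm v0) ^ r"
      using d2P[of x] nx t by (simp add: x_def)
    moreover have "\<epsilon> * (t * norm v0) ^ r = - (t^r * H v0) / 2"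
      using v0 by (simp add: \<epsilon>_def power_mult_distrib)
    moreover have "t^r * H v0 < 0" using t hv by (simp add: mult_pos_neg)
    ultimately show False unfolding Hscale by linarith
  qed
  have H_minf: "\<exists>\<epsilon>>0. \<forall>h :: real^'n \<Rightarrow> real.
              (\<exists>\<rho>>0. \<forall>x\<in>cball xb \<rho>. \<bar>h x - h xb\<bar> \<le> \<epsilon> * norm (x - xb) ^ r)
              \<longrightarrow> local_min_at (\<lambda>x. f x + h x) xb" if Hnn: "\<forall>v. H v \<ge> 0"
  proof -
    obtain m0 where m0: "m0 > 0" "\<forall>v. H v \<ge> m0 * norm v ^ r" using Hpos[OF Hnn] by blast
    have e: "m0 / 2 > 0" using m0 by simp
    obtain \<delta> where d: "\<delta> > 0" and dP: "\<And>x. norm (x - xb) \<le> \<delta> \<Longrightarrow>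
        \<bar>f x - f xb - H (x - xb)\<bar> \<le> m0 / 2 * norm (x - xb) ^ r"
      using approx'[OF e] by blast
    show ?thesis
    proof (intro exI[of _ "m0/2"] conjI allI impI)
      show "m0 / 2 > 0" by fact
      fix h :: "real^'n \<Rightarrow> real"
      assume "\<exists>\<rho>>0. \<forall>x\<in>cball xb \<rho>. \<bar>h x - h xb\<bar> \<le> m0 / 2 * norm (x - xb) ^ r"
      then obtain \<rho> where rho: "\<rho> > 0" and rP: "\<forall>x\<in>cball xb \<rho>. \<bar>h x - h xb\<bar> \<le> m0 / 2 * norm (x - xb) ^ r"
        by blast
      have "f xb + h xb \<le> f x + h x" if x: "x \<in> cball xb (min \<delta> \<rho>)" for x
      proof -
        have 1: "\<bar>f x - f xb - H (x - xb)\<bar> \<le> m0 / 2 * norm (x - xb) ^ r"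
          using dP cb[OF x] by simp
        have 2: "\<bar>h x - h xb\<bar> \<le> m0 / 2 * norm (x - xb) ^ r" using rP x by simp
        have 3: "H (x - xb) \<ge> m0 * norm (x - xb) ^ r" using m0 by blast
        show ?thesis using 1 2 3 by linarith
      qed
      then show "local_min_at (\<lambda>x. f x + h x) xb"
        unfolding local_min_at_def using d rho by (intro exI[of _ "min \<delta> \<rho>"]) auto
    qed
  qed
  have H_minf0: "local_min_at f xb" if Hnn: "\<forall>v. H v \<ge> 0"
  proof -
    obtain \<epsilon> where "\<epsilon> > 0" and P: "\<forall>h :: real^'n \<Rightarrow> real.
              (\<exists>\<rho>>0. \<forall>x\<in>cball xb \<rho>. \<bar>h x - h xb\<bar> \<le> \<epsilon> * norm (x - xb) ^ r)
              \<longrightarrow> local_min_at (\<lambda>x. f x + h x) xb"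
      using H_minf[OF Hnn] by blast
    have "\<exists>\<rho>>0. \<forall>x\<in>cball xb \<rho>. \<bar>(\<lambda>x. 0::real) x - (\<lambda>x. 0) xb\<bar> \<le> \<epsilon> * norm (x - xb) ^ r"
      using \<open>\<epsilon> > 0\<close> by (intro exI[of _ 1]) auto
    from P[rule_format, OF this] show ?thesis by simp
  qed
  show ?thesis
  proof (intro conjI)
    show "\<exists>c>0. \<exists>\<delta>>0. \<forall>x\<in>cball xb \<delta>. norm (grad f x) \<ge> c * norm (x - xb) ^ (r - 1)"
      by (rule P1)
    show "local_min_at f xb \<longleftrightarrow> local_min_at (taylor r f xb) xb"
    proof
      assume "local_min_at f xb"
      then show "local_min_at (taylor r f xb) xb" using minT minf_H by blast
    next
      assume "local_min_at (taylor r f xb) xb"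
      then show "local_min_at f xb" using minT H_minf0 by blast
    qed
    show "local_min_at f xb \<longrightarrow>
           (\<exists>\<epsilon>>0. \<forall>h :: real^'n \<Rightarrow> real.
              (\<exists>\<rho>>0. \<forall>x\<in>cball xb \<rho>. \<bar>h x - h xb\<bar> \<le> \<epsilon> * norm (x - xb) ^ r)
              \<longrightarrow> local_min_at (\<lambda>x. f x + h x) xb)"
    proof
      assume "local_min_at f xb"
      from H_minf[OF minf_H[OF this]] show "\<exists>\<epsilon>>0. \<forall>h :: real^'n \<Rightarrow> real.
              (\<exists>\<rho>>0. \<forall>x\<in>cball xb \<rho>. \<bar>h x - h xb\<bar> \<le> \<epsilon> * norm (x - xb) ^ r)
              \<longrightarrow> local_min_at (\<lambda>x. f x + h x) xb" .
    qed
  qed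
qed

end
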